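(* Let $N, M, n$ be integers with $0 \le M \le N$ and $1 \le n \le N$. Draw $n$ individuals uniformly at random without replacement from a population of $N$ individuals, of which exactly $M$ are positive, and let $i$ be the number of positive individuals among the $n$ drawn. Let $0<\delta<1$ and $c>0$, and put $x = (N/c)^2 > 0$ and $y = -\frac{1}{2}\ln(\delta/2) > 0$. Then with probability at least $1-\delta$ we have $M \in \big[\tfrac{i}{n}N - c,\ \tfrac{i}{n}N + c\big]$, provided that (S1) $n \ge \frac{(N+1)xy}{N+xy}$, in the case $N \le \frac{c^2}{y} - 2$; or (S2) $n \ge \frac{(N-1)xy}{2(N+xy)} + \sqrt{\Big(\frac{(N-1)xy}{2(N+xy)}\Big)^2 + \frac{Nxy}{N+xy}}$, in the case $N > \frac{c^2}{y} - 2$. Moreover, $\frac{(N-1)xy}{2(N+xy)} + \sqrt{\Big(\frac{(N-1)xy}{2(N+xy)}\Big)^2 + \frac{Nxy}{N+xy}} \ge \frac{Nxy}{N+xy}$.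
   Context: $i$ has the hypergeometric distribution: $\mathbb{P}[i=k] = \binom{M}{k}\binom{N-M}{n-k}/\binom{N}{n}$. $M$ is fixed (unknown) and the probability is over the random sample. *)

theory Defs
  imports Complex_Main
begin

definition hypergeom_pmf :: "nat \<Rightarrow> nat \<Rightarrow> nat \<Rightarrow> nat \<Rightarrow> real" where
  "hypergeom_pmf N M n k =
     real (M choose k) * real ((N - M) choose (n - k)) / real (N choose n)"

definition hypergeom_prob :: "nat \<Rightarrow> nat \<Rightarrow> nat \<Rightarrow> (nat \<Rightarrow> bool) \<Rightarrow> real" where
  "hypergeom_prob N M n P = (\<Sum>k\<in>{k\<in>{0..n}. P k}. hypergeom_pmf N M n k)"

end

theory Submission
  imports Defs "HOL-Probability.Hoeffding"
begin

lemma two_point_pos: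
  fixes p h :: real
  assumes "0 \<le> p" "p \<le> 1" "0 \<le> h"
  shows "p * exp (h * (1 - p)) + (1 - p) * exp (- h * p) \<le> exp (h^2 / 8)"
proof -
  have pos: "1 + p * (exp h - 1) > 0"
    using assms by (intro add_pos_nonneg mult_nonneg_nonneg) auto
  have "p * exp (h * (1 - p)) + (1 - p) * exp (- h * p) = exp (- h * p) * (1 + p * (exp h - 1))"
    by (simp add: algebra_simps exp_add[symmetric])
  also have "\<dots> = exp (- h * p + ln (1 + p * (exp h - 1)))"
    using pos by (simp add: exp_add exp_diff exp_minus field_simps)
  also have "\<dots> \<le> exp (h^2/8)"
    using Hoeffdings_lemma_aux[of h p] assms by simp
  finally show ?thesis .
qed

lemma two_point:
  fixes p h :: real
  assumes "0 \<le> p" "p \<le> 1"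
  shows "p * exp (h * (1 - p)) + (1 - p) * exp (- h * p) \<le> exp (h^2 / 8)"
proof (cases "h \<ge> 0")
  case True thus ?thesis using two_point_pos assms by blast
next
  case False
  have "(1 - p) * exp ((-h) * (1 - (1 - p))) + (1 - (1 - p)) * exp (- (-h) * (1 - p)) \<le> exp ((-h)^2/8)"
    using False assms by (intro two_point_pos) auto
  thus ?thesis by (simp add: algebra_simps)
qed

lemma hyp_rec:
  assumes "u \<le> R" "P \<le> Suc R" "j \<le> u"
  shows "hypergeom_pmf (Suc R) P u j =
     real P / real (Suc R) * hypergeom_pmf R (P - 1) u j
     + real (Suc R - P) / real (Suc R) * hypergeom_pmf R P u j"
proof -
  define A where "A = Suc R - P"
  have f1: "real (Suc R - u) * real (Suc R choose u) = real (Suc R) * real (R choose u)"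
    using binomial_absorb_comp[of "Suc R" u] by (metis diff_Suc_1 of_nat_mult)
  have f2: "real (P - j) * real (P choose j) = real P * real ((P - 1) choose j)"
    using binomial_absorb_comp[of P j] by (metis of_nat_mult)
  have f3: "real (A - (u - j)) * real (A choose (u - j)) = real A * real ((A - 1) choose (u - j))"
    using binomial_absorb_comp[of A "u - j"] by (metis of_nat_mult)
  have key: "real (P choose j) * real (A choose (u - j)) * (real (P - j) + real (A - (u - j)))
      = real (P choose j) * real (A choose (u - j)) * real (Suc R - u)"
  proof (cases "j \<le> P \<and> u - j \<le> A")
    case True
    then have "(P - j) + (A - (u - j)) = Suc R - u"
      using assms unfolding A_def by linarith
    then have "real (P - j) + real (A - (u - j)) = real (Suc R - u)"
      by (metis of_nat_add)
    then show ?thesis by simp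
  next
    case False
    then show ?thesis by auto
  qed
  have R5: "R - P = A - 1" unfolding A_def by simp
  have cR: "real (R choose u) > 0" using assms by simp
  have cSR: "real (Suc R choose u) > 0" using assms by simp
  have lhs: "hypergeom_pmf (Suc R) P u j * real (Suc R) * real (R choose u)
      = real (P choose j) * real (A choose (u - j)) * real (Suc R - u)"
  proof -
    have "hypergeom_pmf (Suc R) P u j * real (Suc R) * real (R choose u)
       = real (P choose j) * real (A choose (u - j)) / real (Suc R choose u) * (real (Suc R) * real (R choose u))"
      unfolding hypergeom_pmf_def A_def by simp
    also have "\<dots> = real (P choose j) * real (A choose (u - j)) / real (Suc R choose u) * (real (Suc R - u) * real (Suc R choose u))"
      unfolding f1 ..
    also have "\<dots> = real (P choose j) * real (A choose (u - j)) * real (Suc R - u)"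
      using cSR by (simp add: field_simps)
    finally show ?thesis .
  qed
  have t1: "real P * hypergeom_pmf R (P - 1) u j * real (R choose u)
      = real (P - j) * real (P choose j) * real (A choose (u - j))"
  proof (cases "P = 0")
    case True then show ?thesis by simp
  next
    case False
    then have "R - (P - 1) = A" unfolding A_def by simp
    then show ?thesis unfolding hypergeom_pmf_def using cR f2 by (simp add: field_simps)
  qed
  have t2: "real A * hypergeom_pmf R P u j * real (R choose u)
      = real (A - (u - j)) * real (P choose j) * real (A choose (u - j))"
    unfolding hypergeom_pmf_def R5 using cR f3 by (simp add: field_simps)
  have "hypergeom_pmf (Suc R) P u j * (real (Suc R) * real (R choose u))
      = (real P / real (Suc R) * hypergeom_pmf R (P - 1) u j
         + real A / real (Suc R) * hypergeom_pmf R P u j) * (real (Suc R) * real (R choose u))"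
  proof -
    have "(real P / real (Suc R) * hypergeom_pmf R (P - 1) u j
         + real A / real (Suc R) * hypergeom_pmf R P u j) * (real (Suc R) * real (R choose u))
        = real P * hypergeom_pmf R (P - 1) u j * real (R choose u)
          + real A * hypergeom_pmf R P u j * real (R choose u)"
      by (simp add: field_simps del: of_nat_Suc)
    also have "\<dots> = real (P choose j) * real (A choose (u - j)) * (real (P - j) + real (A - (u - j)))"
      unfolding t1 t2 by (simp add: algebra_simps)
    also have "\<dots> = hypergeom_pmf (Suc R) P u j * real (Suc R) * real (R choose u)"
      unfolding key lhs ..
    finally show ?thesis by (metis mult.assoc)
  qed
  moreover have "real (Suc R) * real (R choose u) \<noteq> 0" using cR by simp
  ultimately show ?thesis unfolding A_def by (metis mult_right_cancel)
qed

lemma hyp_base: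
  assumes "P \<le> u"
  shows "(\<Sum>j\<in>{0..u}. hypergeom_pmf u P u j * f j) = f P"
proof -
  have z: "hypergeom_pmf u P u j = 0" if "j \<in> {0..u}" "j \<noteq> P" for j
  proof (cases "j < P")
    case True
    then have "u - P < u - j" using assms by linarith
    then show ?thesis unfolding hypergeom_pmf_def by simp
  next
    case False
    then have "P < j" using that by simp
    then show ?thesis unfolding hypergeom_pmf_def by simp
  qed
  have "(\<Sum>j\<in>{0..u}. hypergeom_pmf u P u j * f j) = hypergeom_pmf u P u P * f P"
    using assms by (subst sum.remove[of _ P]) (auto simp: z intro!: sum.neutral)
  also have "hypergeom_pmf u P u P = 1" unfolding hypergeom_pmf_def by simp
  finally show ?thesis by simp
qed

definition TT :: "nat \<Rightarrow> nat \<Rightarrow> real" where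
  "TT R u = (\<Sum>i<R-u. 1 / (real (u + i))^2)"

lemma TT_Suc: "u \<le> R \<Longrightarrow> TT (Suc R) u = TT R u + 1 / (real R)^2"
  unfolding TT_def by (simp add: Suc_diff_le)

lemma exp_id1:
  fixes r s a P :: real
  assumes "r > 0"
  shows "s * (a - P / (1 + r)) = s * (a - (P - 1) / r) + (- s / r) * (1 - P / (1 + r))"
proof -
  have "r + 1 \<noteq> 0" "r \<noteq> 0" using assms by auto
  then show ?thesis by (simp add: divide_simps) (simp add: algebra_simps)
qed

lemma exp_id2:
  fixes r s a P :: real
  assumes "r > 0"
  shows "s * (a - P / (1 + r)) = s * (a - P / r) + (- (- s / r)) * (P / (1 + r))"
proof -
  have "r + 1 \<noteq> 0" "r \<noteq> 0" using assms by auto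
  then show ?thesis by (simp add: divide_simps) (simp add: algebra_simps)
qed

lemma mgf_aux:
  fixes s :: real
  assumes "1 \<le> u"
  shows "\<forall>R P. R = u + d \<longrightarrow> P \<le> R \<longrightarrow>
    (\<Sum>j\<in>{0..u}. hypergeom_pmf R P u j * exp (s * (real j / real u - real P / real R)))
      \<le> exp (s^2 / 8 * TT R u)"
proof (induction d)
  case 0
  show ?case
  proof (intro allI impI)
    fix R P assume "R = u + 0" "P \<le> R"
    then show "(\<Sum>j\<in>{0..u}. hypergeom_pmf R P u j * exp (s * (real j / real u - real P / real R)))
      \<le> exp (s^2 / 8 * TT R u)"
      by (simp add: hyp_base TT_def)
  qed
next
  case (Suc d)
  show ?case
  proof (intro allI impI)
    fix R1 P assume R1: "R1 = u + Suc d" and P: "P \<le> R1"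
    define R where "R = u + d"
    have R1R: "R1 = Suc R" using R1 R_def by simp
    have uR: "u \<le> R" using R_def by simp
    have Rpos: "real R > 0" using assms uR by simp
    define p where "p = real P / real (Suc R)"
    define B where "B = exp (s^2 / 8 * TT R u)"
    define g where "g = (\<lambda>j::nat. exp (s * (real j / real u - real P / real (Suc R))))"
    define h where "h = - s / real R"
    have p01: "0 \<le> p" "p \<le> 1" using P R1R unfolding p_def by auto
    have q: "real (Suc R - P) / real (Suc R) = 1 - p"
      using P R1R unfolding p_def by (simp add: of_nat_diff field_simps del: of_nat_Suc)
    have split: "(\<Sum>j\<in>{0..u}. hypergeom_pmf (Suc R) P u j * g j)
       = p * (\<Sum>j\<in>{0..u}. hypergeom_pmf R (P - 1) u j * g j)
         + (1 - p) * (\<Sum>j\<in>{0..u}. hypergeom_pmf R P u j * g j)"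
    proof -
      have "hypergeom_pmf (Suc R) P u j * g j = p * (hypergeom_pmf R (P - 1) u j * g j)
         + (1 - p) * (hypergeom_pmf R P u j * g j)" if "j \<in> {0..u}" for j
      proof -
        have "hypergeom_pmf (Suc R) P u j = real P / real (Suc R) * hypergeom_pmf R (P - 1) u j
            + real (Suc R - P) / real (Suc R) * hypergeom_pmf R P u j"
          using uR P R1R that by (intro hyp_rec) auto
        then have eq: "hypergeom_pmf (Suc R) P u j = p * hypergeom_pmf R (P - 1) u j + (1 - p) * hypergeom_pmf R P u j"
          unfolding q p_def .
        show ?thesis unfolding eq by (simp add: algebra_simps)
      qed
      then show ?thesis unfolding sum_distrib_left sum.distrib[symmetric] by (rule sum.cong[OF refl])
    qed
    have t1: "p * (\<Sum>j\<in>{0..u}. hypergeom_pmf R (P - 1) u j * g j) \<le> p * (exp (h * (1 - p)) * B)"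
    proof (cases "P = 0")
      case True then show ?thesis by (simp add: p_def)
    next
      case False
      have e: "g j = exp (s * (real j / real u - real (P - 1) / real R)) * exp (h * (1 - p))" for j
      proof -
        have r: "real (P - 1) = real P - 1" using False by (simp add: of_nat_diff)
        have "s * (real j / real u - real P / (1 + real R))
           = s * (real j / real u - (real P - 1) / real R) + (- s / real R) * (1 - real P / (1 + real R))"
          using Rpos by (rule exp_id1)
        then show ?thesis unfolding g_def h_def p_def r by (simp add: exp_add[symmetric])
      qed
      have "(\<Sum>j\<in>{0..u}. hypergeom_pmf R (P - 1) u j * g j)
          = (\<Sum>j\<in>{0..u}. hypergeom_pmf R (P - 1) u j * exp (s * (real j / real u - real (P - 1) / real R))) * exp (h * (1 - p))"
        unfolding e sum_distrib_right by (simp add: mult.assoc)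
      also have "\<dots> \<le> B * exp (h * (1 - p))"
        using Suc.IH R_def P R1R unfolding B_def by (intro mult_right_mono) auto
      finally show ?thesis using p01 by (intro mult_left_mono) (auto simp: mult.commute)
    qed
    have t2: "(1 - p) * (\<Sum>j\<in>{0..u}. hypergeom_pmf R P u j * g j) \<le> (1 - p) * (exp (- h * p) * B)"
    proof (cases "P = Suc R")
      case True then show ?thesis by (simp add: p_def)
    next
      case False
      then have PR: "P \<le> R" using P R1R by simp
      have e: "g j = exp (s * (real j / real u - real P / real R)) * exp (- h * p)" for j
      proof -
        have "s * (real j / real u - real P / (1 + real R))
           = s * (real j / real u - real P / real R) + (- (- s / real R)) * (real P / (1 + real R))"
          using Rpos by (rule exp_id2)
        then show ?thesis unfolding g_def h_def p_def by (simp add: exp_add[symmetric])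
      qed
      have "(\<Sum>j\<in>{0..u}. hypergeom_pmf R P u j * g j)
          = (\<Sum>j\<in>{0..u}. hypergeom_pmf R P u j * exp (s * (real j / real u - real P / real R))) * exp (- h * p)"
        unfolding e sum_distrib_right by (simp add: mult.assoc)
      also have "\<dots> \<le> B * exp (- h * p)"
        using Suc.IH R_def PR unfolding B_def by (intro mult_right_mono) auto
      finally show ?thesis using p01 by (intro mult_left_mono) (auto simp: mult.commute)
    qed
    have "(\<Sum>j\<in>{0..u}. hypergeom_pmf R1 P u j * exp (s * (real j / real u - real P / real R1)))
        = (\<Sum>j\<in>{0..u}. hypergeom_pmf (Suc R) P u j * g j)" unfolding g_def R1R ..
    also have "\<dots> \<le> (p * exp (h * (1 - p)) + (1 - p) * exp (- h * p)) * B"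
      using split t1 t2 by (simp add: algebra_simps)
    also have "\<dots> \<le> exp (h^2/8) * B"
      using two_point[OF p01] unfolding B_def by (intro mult_right_mono) auto
    also have "\<dots> = exp (s^2 / 8 * TT R1 u)"
      unfolding B_def R1R TT_Suc[OF uR] h_def using Rpos
      by (simp add: exp_add[symmetric] field_simps power2_eq_square)
    finally show "(\<Sum>j\<in>{0..u}. hypergeom_pmf R1 P u j * exp (s * (real j / real u - real P / real R1)))
      \<le> exp (s^2 / 8 * TT R1 u)" .
  qed
qed

lemma mgf:
  fixes s :: real
  assumes "1 \<le> u" "u \<le> R" "P \<le> R"
  shows "(\<Sum>j\<in>{0..u}. hypergeom_pmf R P u j * exp (s * (real j / real u - real P / real R)))
      \<le> exp (s^2 / 8 * TT R u)"
  using mgf_aux[OF assms(1), of "R - u" s] assms by auto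

lemma compl_sum:
  assumes "n \<le> N" "M \<le> N"
  shows "(\<Sum>k\<in>{0..n}. hypergeom_pmf N M n k * g k)
       = (\<Sum>j\<in>{0..N-n}. hypergeom_pmf N M (N-n) j * g (M - j))"
proof -
  define S where "S = {k\<in>{0..n}. k \<le> M \<and> M - k \<le> N - n}"
  have fin: "finite S" unfolding S_def by simp
  have L: "(\<Sum>k\<in>{0..n}. hypergeom_pmf N M n k * g k) = (\<Sum>k\<in>S. hypergeom_pmf N M n k * g k)"
  proof (rule sum.mono_neutral_right)
    show "\<forall>k\<in>{0..n} - S. hypergeom_pmf N M n k * g k = 0"
    proof
      fix k assume k: "k \<in> {0..n} - S"
      show "hypergeom_pmf N M n k * g k = 0"
      proof (cases "k \<le> M")
        case True
        with k have "N - n < M - k" unfolding S_def by auto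
        then have "N - M < n - k" using assms True by linarith
        then show ?thesis unfolding hypergeom_pmf_def by simp
      next
        case False then show ?thesis unfolding hypergeom_pmf_def by simp
      qed
    qed
  qed (auto simp: S_def)
  have inj: "inj_on (\<lambda>k. M - k) S" unfolding S_def by (rule inj_onI) auto
  have R1: "(\<Sum>j\<in>{0..N-n}. hypergeom_pmf N M (N-n) j * g (M - j))
      = (\<Sum>j\<in>(\<lambda>k. M - k) ` S. hypergeom_pmf N M (N-n) j * g (M - j))"
  proof (rule sum.mono_neutral_right)
    show "(\<lambda>k. M - k) ` S \<subseteq> {0..N - n}" unfolding S_def by auto
    show "\<forall>j\<in>{0..N - n} - (\<lambda>k. M - k) ` S. hypergeom_pmf N M (N - n) j * g (M - j) = 0"
    proof
      fix j assume j: "j \<in> {0..N - n} - (\<lambda>k. M - k) ` S"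
      show "hypergeom_pmf N M (N - n) j * g (M - j) = 0"
      proof (cases "j \<le> M \<and> M - j \<le> n")
        case True
        then have "M - j \<in> S" "M - (M - j) = j" using j unfolding S_def by auto
        then have "j \<in> (\<lambda>k. M - k) ` S" by (metis image_eqI)
        with j show ?thesis by simp
      next
        case False
        show ?thesis
        proof (cases "j \<le> M")
          case True
          with False have "n < M - j" by simp
          then have "N - M < N - n - j" using assms j True by auto
          then show ?thesis unfolding hypergeom_pmf_def by simp
        next
          case False then show ?thesis unfolding hypergeom_pmf_def by simp
        qed
      qed
    qed
  qed simp
  have R2: "(\<Sum>j\<in>(\<lambda>k. M - k) ` S. hypergeom_pmf N M (N-n) j * g (M - j))
      = (\<Sum>k\<in>S. hypergeom_pmf N M (N-n) (M - k) * g (M - (M - k)))"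
    using sum.reindex[OF inj] by simp
  have R3: "hypergeom_pmf N M (N-n) (M - k) * g (M - (M - k)) = hypergeom_pmf N M n k * g k"
    if "k \<in> S" for k
  proof -
    from that have k: "k \<le> n" "k \<le> M" "M - k \<le> N - n" unfolding S_def by auto
    have a: "M choose (M - k) = M choose k" using k binomial_symmetric[of k M] by simp
    have e: "N - n - (M - k) = (N - M) - (n - k)" "n - k \<le> N - M" using k assms by auto
    have b: "(N - M) choose (N - n - (M - k)) = (N - M) choose (n - k)"
      unfolding e(1) using binomial_symmetric[OF e(2)] by simp
    have c: "N choose (N - n) = N choose n" using binomial_symmetric[OF assms(1)] by simp
    have d: "M - (M - k) = k" using k by simp
    show ?thesis unfolding hypergeom_pmf_def a b c d by simp
  qed
  show ?thesis unfolding L R1 R2 using R3 by (intro sum.cong) auto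
qed

lemma serfling_sum:
  assumes "1 \<le> m"
  shows "(real m)^2 * (\<Sum>i<d. 1 / (real (m + i))^2) \<le> real d * (real m + 1) / (real m + real d)"
proof (induction d)
  case 0 then show ?case by simp
next
  case (Suc d)
  have m: "real m \<ge> 1" using assms by simp
  have step: "(real m)^2 / (real m + real d)^2 \<le>
     real (Suc d) * (real m + 1) / (real m + real (Suc d)) - real d * (real m + 1) / (real m + real d)"
  proof -
    have p1: "real m + real d > 0" "real m + real d + 1 > 0" using m by auto
    have "real (Suc d) * (real m + 1) / (real m + real (Suc d)) - real d * (real m + 1) / (real m + real d)
        = real m * (real m + 1) / ((real m + real d) * (real m + real d + 1))"
      using p1 by (simp add: divide_simps) (simp add: algebra_simps)
    moreover have "(real m)^2 / (real m + real d)^2 \<le> real m * (real m + 1) / ((real m + real d) * (real m + real d + 1))"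
      using p1 m by (simp add: divide_simps power2_eq_square) (simp add: algebra_simps mult_left_mono)
    ultimately show ?thesis by simp
  qed
  have "(real m)^2 * (\<Sum>i<Suc d. 1 / (real (m + i))^2)
      = (real m)^2 * (\<Sum>i<d. 1 / (real (m + i))^2) + (real m)^2 / (real m + real d)^2"
    by (simp add: algebra_simps)
  also have "\<dots> \<le> real (Suc d) * (real m + 1) / (real m + real (Suc d))"
    using Suc.IH step by linarith
  finally show ?case .
qed

lemma total_mass:
  assumes "M \<le> N" "n \<le> N"
  shows "(\<Sum>k\<in>{0..n}. hypergeom_pmf N M n k) = 1"
proof -
  have "(\<Sum>k\<in>{0..n}. real (M choose k) * real ((N - M) choose (n - k))) = real (N choose n)"
    using vandermonde[of M "N - M" n] assms by (simp add: atMost_atLeast0 flip: of_nat_mult of_nat_sum)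
  moreover have "real (N choose n) > 0" using assms by simp
  ultimately show ?thesis unfolding hypergeom_pmf_def by (simp add: sum_divide_distrib[symmetric])
qed

lemma chernoff_two:
  fixes pm D :: "nat \<Rightarrow> real" and V a :: real and n :: nat
  assumes nn: "\<And>k. k \<in> {0..n} \<Longrightarrow> pm k \<ge> 0"
    and tot: "(\<Sum>k\<in>{0..n}. pm k) = 1"
    and mg: "\<And>l. (\<Sum>k\<in>{0..n}. pm k * exp (l * D k)) \<le> exp (l^2 * V / 8)"
    and V: "V > 0" and a: "a > 0"
  shows "(\<Sum>k\<in>{0..n}. if \<bar>D k\<bar> \<le> a then pm k else 0) \<ge> 1 - 2 * exp (- 2 * a^2 / V)"
proof -
  define l where "l = 4 * a / V"
  have l: "l > 0" using V a unfolding l_def by simp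
  have tw: "pm k - (if \<bar>D k\<bar> \<le> a then pm k else 0)
      \<le> exp (- l * a) * (pm k * exp (l * D k) + pm k * exp ((- l) * D k))" if k: "k \<in> {0..n}" for k
  proof (cases "\<bar>D k\<bar> \<le> a")
    case True then show ?thesis using nn[OF k] by simp
  next
    case False
    then have "exp (- l * a) * exp (l * D k) \<ge> 1 \<or> exp (- l * a) * exp ((- l) * D k) \<ge> 1"
    proof (cases "D k > a")
      case True
      then have "- l * a + l * D k \<ge> 0" using l by (simp add: algebra_simps)
      then show ?thesis by (simp add: exp_add[symmetric])
    next
      case False
      then have "D k < - a" using \<open>\<not> \<bar>D k\<bar> \<le> a\<close> by auto
      then have "l * D k \<le> l * (- a)" using l by (intro mult_left_mono) auto
      then have "- l * a + (- l) * D k \<ge> 0" by (simp add: algebra_simps)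
      then show ?thesis by (simp add: exp_add[symmetric])
    qed
    then have "exp (- l * a) * (exp (l * D k) + exp ((- l) * D k)) \<ge> 1"
      by (auto simp: distrib_left add_increasing2 add_increasing)
    then have "pm k * 1 \<le> pm k * (exp (- l * a) * (exp (l * D k) + exp ((- l) * D k)))"
      using nn[OF k] by (intro mult_left_mono) auto
    then show ?thesis using False by (simp add: algebra_simps)
  qed
  have "1 - (\<Sum>k\<in>{0..n}. if \<bar>D k\<bar> \<le> a then pm k else 0)
      = (\<Sum>k\<in>{0..n}. pm k - (if \<bar>D k\<bar> \<le> a then pm k else 0))"
    using tot by (simp add: sum_subtractf)
  also have "\<dots> \<le> (\<Sum>k\<in>{0..n}. exp (- l * a) * (pm k * exp (l * D k) + pm k * exp ((- l) * D k)))"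
    using tw by (intro sum_mono) auto
  also have "\<dots> = exp (- l * a) * ((\<Sum>k\<in>{0..n}. pm k * exp (l * D k)) + (\<Sum>k\<in>{0..n}. pm k * exp ((- l) * D k)))"
    by (simp only: sum_distrib_left[symmetric] sum.distrib[symmetric])
  also have "\<dots> \<le> exp (- l * a) * (exp (l^2 * V / 8) + exp ((- l)^2 * V / 8))"
    using mg[of l] mg[of "- l"] by (intro mult_left_mono add_mono) auto
  also have "\<dots> = 2 * exp (- l * a + l^2 * V / 8)"
    by (simp only: exp_add power2_minus) simp
  also have "- l * a + l^2 * V / 8 = - 2 * a^2 / V"
    unfolding l_def using V by (simp add: field_simps power2_eq_square)
  finally show ?thesis by linarith
qed

lemma good_aux:
  fixes k n N M c :: real
  assumes "n > 0" "N > 0"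
  shows "(k / n * N - c \<le> M \<longleftrightarrow> k - n * M / N \<le> c * n / N)"
    and "(M \<le> k / n * N + c \<longleftrightarrow> - (c * n / N) \<le> k - n * M / N)"
proof -
  have e: "k - n * M / N = (k * N - n * M) / N" using assms by (simp add: field_simps)
  have "k / n * N - c \<le> M \<longleftrightarrow> k * N \<le> (M + c) * n"
    using assms by (simp add: field_simps)
  also have "\<dots> \<longleftrightarrow> (k * N - n * M) / N \<le> (c * n) / N"
    using assms by (simp add: divide_le_cancel algebra_simps)
  finally show "(k / n * N - c \<le> M \<longleftrightarrow> k - n * M / N \<le> c * n / N)" unfolding e .
  have "M \<le> k / n * N + c \<longleftrightarrow> (M - c) * n \<le> k * N"
    using assms by (simp add: field_simps)
  also have "\<dots> \<longleftrightarrow> (- (c * n)) / N \<le> (k * N - n * M) / N"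
    using assms by (simp only: divide_le_cancel) (auto simp: algebra_simps)
  finally show "(M \<le> k / n * N + c \<longleftrightarrow> - (c * n / N) \<le> k - n * M / N)" unfolding e by simp
qed

theorem lemma8:
  fixes N M n :: nat and \<delta> c :: real
  assumes "M \<le> N" and "1 \<le> n" and "n \<le> N"
    and "0 < \<delta>" and "\<delta> < 1" and "0 < c"
  defines "x \<equiv> (real N / c)^2"
    and "y \<equiv> - (1/2) * ln (\<delta> / 2)"
  shows "(((real N \<le> c^2 / y - 2 \<and>
             real n \<ge> (real N + 1) * x * y / (real N + x * y))
         \<or> (real N > c^2 / y - 2 \<and>
             real n \<ge> (real N - 1) * x * y / (2 * (real N + x * y))
               + sqrt (((real N - 1) * x * y / (2 * (real N + x * y)))^2
                       + real N * x * y / (real N + x * y))))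
         \<longrightarrow> hypergeom_prob N M n
               (\<lambda>i. real i / real n * real N - c \<le> real M \<and>
                    real M \<le> real i / real n * real N + c) \<ge> 1 - \<delta>)
     \<and> (real N - 1) * x * y / (2 * (real N + x * y))
         + sqrt (((real N - 1) * x * y / (2 * (real N + x * y)))^2
                 + real N * x * y / (real N + x * y))
       \<ge> real N * x * y / (real N + x * y)"
proof -
  have N1: "real N \<ge> 1" using assms(2,3) by simp
  have npos: "real n > 0" using assms(2) by simp
  have ylog: "ln (\<delta> / 2) < 0" using assms(4,5) by simp
  have y: "y > 0" unfolding y_def using ylog by simp
  have x: "x > 0" unfolding x_def using N1 assms(6) by simp
  have xy: "x * y > 0" using x y by simp
  define A where "A = (real N - 1) * x * y / (2 * (real N + x * y))"
  define B where "B = real N * x * y / (real N + x * y)"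
  have NXY: "real N + x * y > 0" using N1 xy by simp
  have A0: "A \<ge> 0"
  proof -
    have "(real N - 1) * x * y \<ge> 0" using N1 xy by (simp add: mult.assoc)
    then show ?thesis unfolding A_def using NXY by simp
  qed
  have A2: "2 * A = (real N - 1) * x * y / (real N + x * y)"
  proof -
    have "real N + x * y \<noteq> 0" using NXY by simp
    then show ?thesis unfolding A_def by (simp add: divide_simps)
  qed
  have B0: "B \<ge> 0"
  proof -
    have "real N * x * y \<ge> 0" using N1 xy by (simp add: mult.assoc)
    then show ?thesis unfolding B_def using NXY by simp
  qed
  have part2: "A + sqrt (A^2 + B) \<ge> B"
  proof (cases "B \<le> A")
    case True
    have "sqrt (A^2 + B) \<ge> 0" using B0 by simp
    then show ?thesis using True by linarith
  next
    case False
    note A2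
    then have "B - 2 * A = (real N * x * y - (real N - 1) * x * y) / (real N + x * y)"
      unfolding B_def by (simp add: diff_divide_distrib)
    also have "real N * x * y - (real N - 1) * x * y = x * y" by (simp add: algebra_simps)
    finally have "B - 2 * A = x * y / (real N + x * y)" .
    also have "\<dots> \<le> 1" using NXY N1 by simp
    finally have b1: "B - 2 * A \<le> 1" .
    have "(B - A)^2 \<le> A^2 + B"
    proof -
      have "(B - A)^2 = A^2 + B * (B - 2 * A)" by (simp add: power2_eq_square algebra_simps)
      also have "B * (B - 2 * A) \<le> B * 1" using b1 B0 by (intro mult_left_mono) auto
      finally show ?thesis by simp
    qed
    then have "B - A \<le> sqrt (A^2 + B)" using False by (simp add: real_le_rsqrt)
    then show ?thesis by simp
  qed
  define a where "a = c * real n / real N"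
  define D where "D = (\<lambda>k::nat. real k - real n * real M / real N)"
  define pm where "pm = hypergeom_pmf N M n"
  have a: "a > 0" unfolding a_def using assms(6) npos N1 by simp
  have good: "(real k / real n * real N - c \<le> real M \<and> real M \<le> real k / real n * real N + c)
      \<longleftrightarrow> \<bar>D k\<bar> \<le> a" for k
  proof -
    have "real k / real n * real N - c \<le> real M \<longleftrightarrow> D k \<le> a"
      unfolding D_def a_def using npos N1 by (intro good_aux(1)) auto
    moreover have "real M \<le> real k / real n * real N + c \<longleftrightarrow> - a \<le> D k"
      unfolding D_def a_def using npos N1 by (intro good_aux(2)) auto
    ultimately show ?thesis by auto
  qed
  have prob_eq: "hypergeom_prob N M n
               (\<lambda>i. real i / real n * real N - c \<le> real M \<and>
                    real M \<le> real i / real n * real N + c)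
      = (\<Sum>k\<in>{0..n}. if \<bar>D k\<bar> \<le> a then pm k else 0)"
    unfolding hypergeom_prob_def good pm_def by (rule sum.inter_filter) simp
  have pm_nn: "pm k \<ge> 0" for k unfolding pm_def hypergeom_pmf_def by simp
  have tot: "(\<Sum>k\<in>{0..n}. pm k) = 1" unfolding pm_def using total_mass assms(1,3) by simp
  have tail: "hypergeom_prob N M n
               (\<lambda>i. real i / real n * real N - c \<le> real M \<and>
                    real M \<le> real i / real n * real N + c) \<ge> 1 - \<delta>"
    if V: "V > 0" and mg: "\<And>l. (\<Sum>k\<in>{0..n}. pm k * exp (l * D k)) \<le> exp (l^2 * V / 8)"
      and nV: "(real n)^2 \<ge> x * y * V" for V
  proof -
    have ch: "(\<Sum>k\<in>{0..n}. if \<bar>D k\<bar> \<le> a then pm k else 0) \<ge> 1 - 2 * exp (- 2 * a^2 / V)"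
      by (rule chernoff_two[OF pm_nn tot mg V a])
    have "a^2 = c^2 / (real N)^2 * (real n)^2" unfolding a_def by (simp add: power_divide power_mult_distrib)
    also have "\<dots> \<ge> c^2 / (real N)^2 * (x * y * V)"
      using nV by (intro mult_left_mono) auto
    finally have "a^2 \<ge> c^2 / (real N)^2 * (x * y * V)" .
    moreover have "c^2 / (real N)^2 * (x * y * V) = y * V"
      unfolding x_def using N1 assms(6) by (simp add: power_divide)
    ultimately have "a^2 \<ge> y * V" by simp
    then have "a^2 / V \<ge> y" using V by (simp add: field_simps)
    then have "- 2 * a^2 / V \<le> ln (\<delta> / 2)" unfolding y_def by simp
    then have "exp (- 2 * a^2 / V) \<le> \<delta> / 2"
      using assms(4) by (metis exp_le_cancel_iff exp_ln half_gt_zero)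
    then show ?thesis using ch prob_eq by simp
  qed
  have mgB: "(\<Sum>k\<in>{0..n}. pm k * exp (l * D k)) \<le> exp (l^2 * ((real N - real n) * (real n + 1) / real N) / 8)"
    if nN: "n < N" for l
  proof -
    have "(\<Sum>k\<in>{0..n}. pm k * exp (l * D k))
        = (\<Sum>k\<in>{0..n}. hypergeom_pmf N M n k * exp ((l * real n) * (real k / real n - real M / real N)))"
      unfolding pm_def D_def using npos by (intro sum.cong refl) (simp add: field_simps)
    also have "\<dots> \<le> exp ((l * real n)^2 / 8 * TT N n)"
      using assms by (intro mgf) auto
    also have "\<dots> \<le> exp (l^2 * ((real N - real n) * (real n + 1) / real N) / 8)"
    proof -
      have "(real n)^2 * TT N n \<le> real (N - n) * (real n + 1) / (real n + real (N - n))"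
        unfolding TT_def using serfling_sum[OF assms(2), of "N - n"] by simp
      also have "\<dots> = (real N - real n) * (real n + 1) / real N"
        using nN by (simp add: of_nat_diff)
      finally have "(real n)^2 * TT N n \<le> (real N - real n) * (real n + 1) / real N" .
      then have "l^2 * ((real n)^2 * TT N n) \<le> l^2 * ((real N - real n) * (real n + 1) / real N)"
        by (intro mult_left_mono) auto
      then have "l^2 * ((real n)^2 * TT N n) / 8 \<le> l^2 * ((real N - real n) * (real n + 1) / real N) / 8"
        by (rule divide_right_mono) simp
      moreover have eq: "(l * real n)^2 / 8 * TT N n = l^2 * ((real n)^2 * TT N n) / 8"
        by (simp add: power_mult_distrib)
      ultimately show ?thesis by (simp only: eq exp_le_cancel_iff)
    qed
    finally show ?thesis .
  qed
  have mgS: "(\<Sum>k\<in>{0..n}. pm k * exp (l * D k)) \<le> exp (l^2 * (real n * (real N - real n + 1) / real N) / 8)"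
    if nN: "n < N" for l
  proof -
    define u where "u = N - n"
    have u1: "1 \<le> u" using nN unfolding u_def by simp
    have ur: "real u = real N - real n" unfolding u_def using nN by (simp add: of_nat_diff)
    have upos: "real u > 0" using u1 by simp
    have "(\<Sum>k\<in>{0..n}. pm k * exp (l * D k))
        = (\<Sum>j\<in>{0..N-n}. hypergeom_pmf N M (N-n) j * exp (l * D (M - j)))"
      unfolding pm_def by (rule compl_sum[OF assms(3,1)])
    also have "\<dots> = (\<Sum>j\<in>{0..u}. hypergeom_pmf N M u j * exp ((- l * real u) * (real j / real u - real M / real N)))"
    proof (intro sum.cong, simp add: u_def)
      fix j assume j: "j \<in> {0..u}"
      show "hypergeom_pmf N M (N - n) j * exp (l * D (M - j)) =
         hypergeom_pmf N M u j * exp (- l * real u * (real j / real u - real M / real N))"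
      proof (cases "j \<le> M")
        case True
        have "l * D (M - j) = - l * real u * (real j / real u - real M / real N)"
        proof -
          have NN: "real N = real n + real u" using ur by simp
          show ?thesis
            unfolding D_def using True upos N1 ur by (simp add: of_nat_diff field_simps) (simp add: NN algebra_simps)
        qed
        then show ?thesis unfolding u_def by simp
      next
        case False
        then show ?thesis unfolding hypergeom_pmf_def u_def by simp
      qed
    qed
    also have "\<dots> \<le> exp ((- l * real u)^2 / 8 * TT N u)"
      using assms u1 unfolding u_def by (intro mgf) auto
    also have "\<dots> \<le> exp (l^2 * (real n * (real N - real n + 1) / real N) / 8)"
    proof -
      have NU: "N - u = n" unfolding u_def using nN by simp
      have "(real u)^2 * TT N u \<le> real n * (real u + 1) / (real u + real n)"
        unfolding TT_def NU using serfling_sum[OF u1, of n] by simp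
      also have "\<dots> = real n * (real N - real n + 1) / real N"
        using ur by simp
      finally have "(real u)^2 * TT N u \<le> real n * (real N - real n + 1) / real N" .
      then have "l^2 * ((real u)^2 * TT N u) \<le> l^2 * (real n * (real N - real n + 1) / real N)"
        by (intro mult_left_mono) auto
      then have "l^2 * ((real u)^2 * TT N u) / 8 \<le> l^2 * (real n * (real N - real n + 1) / real N) / 8"
        by (rule divide_right_mono) simp
      moreover have eq: "(- l * real u)^2 / 8 * TT N u = l^2 * ((real u)^2 * TT N u) / 8"
        by (simp add: power_mult_distrib)
      ultimately show ?thesis by (simp only: eq exp_le_cancel_iff)
    qed
    finally show ?thesis .
  qed
  have part1: "hypergeom_prob N M n
               (\<lambda>i. real i / real n * real N - c \<le> real M \<and>
                    real M \<le> real i / real n * real N + c) \<ge> 1 - \<delta>"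
    if hyp: "(real N \<le> c^2 / y - 2 \<and> real n \<ge> (real N + 1) * x * y / (real N + x * y))
         \<or> (real N > c^2 / y - 2 \<and> real n \<ge> A + sqrt (A^2 + B))"
  proof (cases "n = N")
    case True
    have "\<bar>D M\<bar> \<le> a" unfolding D_def True using a N1 by simp
    have "(\<Sum>k\<in>{0..n}. if \<bar>D k\<bar> \<le> a then pm k else 0)
        = (\<Sum>k\<in>{0..N}. hypergeom_pmf N M N k * (if \<bar>D k\<bar> \<le> a then 1 else 0))"
      unfolding pm_def True by (intro sum.cong) auto
    also have "\<dots> = (if \<bar>D M\<bar> \<le> a then 1 else 0)"
      by (rule hyp_base[OF assms(1)])
    also have "\<dots> = 1" using \<open>\<bar>D M\<bar> \<le> a\<close> by simp
    finally show ?thesis using prob_eq assms(4) by simp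
  next
    case False
    then have nN: "n < N" using assms(3) by simp
    from hyp show ?thesis
    proof
      assume h: "real N \<le> c^2 / y - 2 \<and> real n \<ge> (real N + 1) * x * y / (real N + x * y)"
      define V where "V = real n * (real N - real n + 1) / real N"
      have V: "V > 0" unfolding V_def using nN npos N1 by simp
      have "(real N + 1) * (x * y) \<le> real n * (real N + x * y)"
        using h NXY by (simp add: field_simps)
      then have "x * y * (real N - real n + 1) \<le> real n * real N" by (simp add: algebra_simps)
      then have "x * y * (real N - real n + 1) * real n \<le> real n * real N * real n"
        using npos by (intro mult_right_mono) auto
      then have "(real n)^2 \<ge> x * y * V" unfolding V_def using N1
        by (simp add: field_simps power2_eq_square)
      then show ?thesis using tail[OF V] mgS[OF nN] unfolding V_def by blast
    next
      assume h: "real N > c^2 / y - 2 \<and> real n \<ge> A + sqrt (A^2 + B)"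
      define V where "V = (real N - real n) * (real n + 1) / real N"
      have V: "V > 0" unfolding V_def using nN npos N1 by simp
      have "sqrt (A^2 + B) \<le> real n - A" using h by simp
      moreover have "A^2 + B \<ge> 0" using B0 zero_le_power2[of A] by linarith
      ultimately have "A^2 + B \<le> (real n - A)^2"
      proof -
        assume s1: "sqrt (A^2 + B) \<le> real n - A" and s2: "A^2 + B \<ge> 0"
        have "A^2 + B = (sqrt (A^2 + B))^2" using s2 by simp
        also have "\<dots> \<le> (real n - A)^2" using s1 s2 by (intro power_mono) auto
        finally show ?thesis .
      qed
      then have "B \<le> (real n)^2 - 2 * A * real n" by (simp add: power2_eq_square algebra_simps)
      then have "B * (real N + x * y) \<le> ((real n)^2 - 2 * A * real n) * (real N + x * y)"
        using NXY by (intro mult_right_mono) auto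
      moreover have "B * (real N + x * y) = real N * x * y" unfolding B_def using NXY by simp
      moreover have "((real n)^2 - 2 * A * real n) * (real N + x * y)
          = (real n)^2 * (real N + x * y) - real n * (2 * A * (real N + x * y))"
        by (simp add: algebra_simps)
      moreover have "2 * A * (real N + x * y) = (real N - 1) * x * y" unfolding A2 using NXY by simp
      ultimately have "real N * x * y \<le> (real n)^2 * (real N + x * y) - real n * ((real N - 1) * x * y)"
        by simp
      then have "x * y * ((real N - real n) * (real n + 1)) \<le> (real n)^2 * real N"
        by (simp add: algebra_simps power2_eq_square)
      then have "(real n)^2 \<ge> x * y * V" unfolding V_def using N1
        by (simp add: field_simps)
      then show ?thesis using tail[OF V] mgB[OF nN] unfolding V_def by blast
    qed
  qed
  show ?thesis using part1 part2 unfolding A_def B_def by blast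
qed

end
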